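(* Let $A=\mathbb Q[x_1,x_2,\dots]$ be the polynomial algebra graded by $\deg x_n=n$, and let $d:A\to A$ be the derivation with $d x_n=x_{n-1}$ for $n\ge2$ and $d x_1=0$ (so $d$ lowers degree by $1$). Then every element of $A$ of positive degree lies in the image of $d$.
   Context: Equivalently, in terms of $s_n=n!\,x_n$ (the universal power sums in the rational cohomology of the index-zero Fredholm operators), $d s_n=n s_{n-1}$ for $n\ge2$ and $d s_1=0$. *)

theory Defs
  imports Complex_Main "HOL-Library.Poly_Mapping"
begin

text \<open>A monomial is a finitely supported
exponent vector; the key i of a monomial stands for the variable x_(i+1).\<close>

type_synonym mono = "nat \<Rightarrow>\<^sub>0 nat"
type_synonym qpoly = "mono \<Rightarrow>\<^sub>0 rat"

definition Xv :: "nat \<Rightarrow> qpoly" where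
  "Xv n = Poly_Mapping.single (Poly_Mapping.single (n - 1) 1) 1"

definition const :: "rat \<Rightarrow> qpoly" where
  "const c = Poly_Mapping.single 0 c"

definition wdeg :: "mono \<Rightarrow> nat" where
  "wdeg m = (\<Sum>i\<in>Poly_Mapping.keys m. (i + 1) * Poly_Mapping.lookup m i)"

definition homogeneous :: "nat \<Rightarrow> qpoly \<Rightarrow> bool" where
  "homogeneous k p \<longleftrightarrow> (\<forall>m\<in>Poly_Mapping.keys p. wdeg m = k)"

definition is_derivation :: "(qpoly \<Rightarrow> qpoly) \<Rightarrow> bool" where
  "is_derivation D \<longleftrightarrow>
     (\<forall>p q. D (p + q) = D p + D q) \<and>
     (\<forall>c p. D (const c * p) = const c * D p) \<and>
     (\<forall>p q. D (p * q) = p * D q + D p * q)"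

end

theory Submission
  imports Defs
begin

lemma span_lemma:
  fixes X :: "('k \<Rightarrow>\<^sub>0 'v::monoid_add) set" and S :: "'k set" and p :: "'k \<Rightarrow>\<^sub>0 'v"
  assumes "0 \<in> X" "\<And>x y. x \<in> X \<Longrightarrow> y \<in> X \<Longrightarrow> x + y \<in> X"
    "\<And>m c. m \<in> S \<Longrightarrow> Poly_Mapping.single m c \<in> X"
  shows "Poly_Mapping.keys p \<subseteq> S \<Longrightarrow> p \<in> X"
proof (induction p rule: Poly_Mapping.update_induct)
  case const
  then show ?case using assms(1) by simp
next
  case (update g u w)
  have eq: "Poly_Mapping.update u w g = Poly_Mapping.single u w + g"
    using update.hyps(1)
    by (intro poly_mapping_eqI) (auto simp: lookup_update lookup_add lookup_single in_keys_iff when_def)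
  have "Poly_Mapping.keys (Poly_Mapping.update u w g) = insert u (Poly_Mapping.keys g)"
    unfolding eq using update.hyps by (auto simp: in_keys_iff lookup_add lookup_single when_def split: if_splits)
  then show ?case using update eq assms(2,3) by auto
qed

lemma mono_induct:
  fixes P :: "mono \<Rightarrow> bool"
  assumes "P 0" "\<And>m i. P m \<Longrightarrow> P (m + Poly_Mapping.single i 1)"
  shows "P m"
proof (induction m rule: Poly_Mapping.update_induct)
  case const
  then show ?case using assms(1) by simp
next
  case (update g u w)
  have eq: "Poly_Mapping.update u w g = g + Poly_Mapping.single u w"
    using update.hyps(1)
    by (intro poly_mapping_eqI) (auto simp: lookup_update lookup_add lookup_single in_keys_iff when_def)
  have "P (g + Poly_Mapping.single u n)" for n
  proof (induction n)
    case 0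
    then show ?case using update by simp
  next
    case (Suc n)
    have "g + Poly_Mapping.single u (Suc n) = (g + Poly_Mapping.single u n) + Poly_Mapping.single u 1"
      by (simp add: single_add[symmetric] add.assoc)
    then show ?case using Suc assms(2) by metis
  qed
  then show ?case using eq by simp
qed

lemma wdeg_superset:
  assumes "finite S" "Poly_Mapping.keys m \<subseteq> S"
  shows "wdeg m = (\<Sum>i\<in>S. (i + 1) * Poly_Mapping.lookup m i)"
  unfolding wdeg_def
  by (rule sum.mono_neutral_left) (use assms in \<open>auto simp: in_keys_iff\<close>)

lemma wdeg_add: "wdeg (a + b) = wdeg a + wdeg b"
proof -
  let ?S = "Poly_Mapping.keys a \<union> Poly_Mapping.keys b"
  have f: "finite ?S" by simp
  have "wdeg (a + b) = (\<Sum>i\<in>?S. (i + 1) * Poly_Mapping.lookup (a + b) i)"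
    by (rule wdeg_superset[OF f keys_add])
  also have "\<dots> = (\<Sum>i\<in>?S. (i + 1) * Poly_Mapping.lookup a i + (i + 1) * Poly_Mapping.lookup b i)"
    by (rule sum.cong) (simp_all only: lookup_add add_mult_distrib2)
  also have "\<dots> = (\<Sum>i\<in>?S. (i + 1) * Poly_Mapping.lookup a i) + (\<Sum>i\<in>?S. (i + 1) * Poly_Mapping.lookup b i)"
    by (rule sum.distrib)
  also have "\<dots> = wdeg a + wdeg b"
    using wdeg_superset[OF f, of a] wdeg_superset[OF f, of b] by simp
  finally show ?thesis .
qed

lemma wdeg_single: "wdeg (Poly_Mapping.single i 1) = i + 1"
proof -
  have "Poly_Mapping.keys (Poly_Mapping.single i (1::nat)) = {i}" by simp
  then show ?thesis unfolding wdeg_def by simp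
qed

lemma wdeg_single'[simp]: "wdeg (Poly_Mapping.single i (Suc 0)) = Suc i"
  using wdeg_single[of i] by (simp only: One_nat_def)

lemma wdeg_zero: "wdeg 0 = 0"
  unfolding wdeg_def by simp

definition Lk :: "nat \<Rightarrow> qpoly set" where
  "Lk k = {r. \<forall>m\<in>Poly_Mapping.keys r. wdeg m < k}"

lemma Lk_add: "a \<in> Lk k \<Longrightarrow> b \<in> Lk k \<Longrightarrow> a + b \<in> Lk k"
  unfolding Lk_def mem_Collect_eq
proof (intro ballI)
  fix m assume A: "\<forall>m\<in>Poly_Mapping.keys a. wdeg m < k" and B: "\<forall>m\<in>Poly_Mapping.keys b. wdeg m < k"
    and m: "m \<in> Poly_Mapping.keys (a + b)"
  have "m \<in> Poly_Mapping.keys a \<union> Poly_Mapping.keys b" by (rule subsetD[OF keys_add m])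
  then show "wdeg m < k" using A B by blast
qed

lemma Lk_zero: "0 \<in> Lk k"
  unfolding Lk_def by simp

lemma Lk_mono: "a \<in> Lk k \<Longrightarrow> k \<le> j \<Longrightarrow> a \<in> Lk j"
  unfolding Lk_def mem_Collect_eq using less_le_trans by blast

lemma keys_single_mult:
  "Poly_Mapping.keys (Poly_Mapping.single a c * q) \<subseteq> (\<lambda>b. a + b) ` Poly_Mapping.keys (q::qpoly)"
proof
  fix m assume "m \<in> Poly_Mapping.keys (Poly_Mapping.single a c * q)"
  then have "m \<in> {x + y | x y. x \<in> Poly_Mapping.keys (Poly_Mapping.single a c) \<and> y \<in> Poly_Mapping.keys q}"
    by (rule subsetD[OF keys_mult])
  then obtain x y where xy: "m = x + y" "x \<in> Poly_Mapping.keys (Poly_Mapping.single a c)" "y \<in> Poly_Mapping.keys q"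
    by blast
  have "x = a" using xy(2) by (simp split: if_splits)
  then show "m \<in> (\<lambda>b. a + b) ` Poly_Mapping.keys q" using xy by simp
qed

lemma keys_const_mult: "Poly_Mapping.keys (const c * q) \<subseteq> Poly_Mapping.keys q"
proof -
  have "Poly_Mapping.keys (const c * q) \<subseteq> (\<lambda>b. 0 + b) ` Poly_Mapping.keys q"
    unfolding const_def by (rule keys_single_mult)
  then show ?thesis by simp
qed

lemma single_const: "Poly_Mapping.single m c = const c * Poly_Mapping.single m (1::rat)"
  unfolding const_def mult_single by simp

lemma Xv_mult: "Xv (i + 1) * Poly_Mapping.single m c = Poly_Mapping.single (m + Poly_Mapping.single i 1) c"
proof -
  have "Xv (i + 1) * Poly_Mapping.single m c = Poly_Mapping.single (Poly_Mapping.single i 1 + m) c"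
    unfolding Xv_def mult_single by simp
  then show ?thesis by (simp only: add.commute)
qed

lemma Lk_Xv_mult:
  assumes "r \<in> Lk k" shows "Xv (i + 1) * r \<in> Lk (k + i + 1)"
proof -
  have sub: "Poly_Mapping.keys (Xv (i+1) * r) \<subseteq> (\<lambda>b. Poly_Mapping.single i 1 + b) ` Poly_Mapping.keys r"
    unfolding Xv_def using keys_single_mult[of "Poly_Mapping.single i 1" 1 r] by simp
  show ?thesis unfolding Lk_def mem_Collect_eq
  proof (intro ballI)
    fix m assume "m \<in> Poly_Mapping.keys (Xv (i+1) * r)"
    then have "m \<in> (\<lambda>b. Poly_Mapping.single i 1 + b) ` Poly_Mapping.keys r"
      by (rule subsetD[OF sub])
    then obtain b where b1: "b \<in> Poly_Mapping.keys r" and b2: "m = Poly_Mapping.single i 1 + b"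
      by (rule imageE)
    have "wdeg b < k" using assms b1 unfolding Lk_def by blast
    moreover have "wdeg m = wdeg b + (i + 1)" unfolding b2 wdeg_add wdeg_single by simp
    ultimately show "wdeg m < k + i + 1" by linarith
  qed
qed

locale der =
  fixes d :: "qpoly \<Rightarrow> qpoly"
  assumes D: "is_derivation d"
    and D1: "d (Xv 1) = 0"
    and Dn: "\<And>n. n \<ge> 2 \<Longrightarrow> d (Xv n) = Xv (n - 1)"
begin

lemma add: "d (p + q) = d p + d q" using D unfolding is_derivation_def by blast
lemma cmul: "d (const c * p) = const c * d p" using D unfolding is_derivation_def by blast
lemma leib: "d (p * q) = p * d q + d p * q" using D unfolding is_derivation_def by blast

lemma zero: "d 0 = 0"
proof -
  have "d 0 = d 0 + d 0" using add[of 0 0] by (simp only: add_0_right)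
  then show ?thesis by simp
qed

lemma diff: "d (p - q) = d p - d q"
proof -
  have "d p = d (p - q) + d q" using add[of "p - q" q] by (simp only: diff_add_cancel)
  then show ?thesis by (simp only: eq_diff_eq)
qed

lemma d_one: "d 1 = 0"
proof -
  have "d 1 = 1 * d 1 + d 1 * 1" using leib[of 1 1] by (simp only: mult_1_left)
  then have "d 1 = d 1 + d 1" by (simp only: mult_1_left mult_1_right)
  then show ?thesis by simp
qed

lemma monoA: "d (Poly_Mapping.single m 1) \<in> Lk (wdeg m)"
proof (induction m rule: mono_induct)
  case 1
  show ?case by (simp only: single_one d_one Lk_zero)
next
  case (2 m i)
  let ?M = "Poly_Mapping.single m (1::rat)"
  have e: "Poly_Mapping.single (m + Poly_Mapping.single i 1) (1::rat) = Xv (i+1) * ?M"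
    by (rule Xv_mult[symmetric])
  have w: "wdeg (m + Poly_Mapping.single i 1) = wdeg m + i + 1"
    unfolding wdeg_add wdeg_single by simp
  have t1: "Xv (i+1) * d ?M \<in> Lk (wdeg m + i + 1)"
    using Lk_Xv_mult[OF 2] .
  have t2: "d (Xv (i+1)) * ?M \<in> Lk (wdeg m + i + 1)"
  proof (cases i)
    case 0
    then have "d (Xv (i+1)) = 0" using D1 by simp
    then show ?thesis by (simp only: mult_zero_left Lk_zero)
  next
    case (Suc j)
    have "d (Xv (i+1)) = Xv (j + 1)" using Dn[of "i+1"] Suc by simp
    then have eq: "d (Xv (i+1)) * ?M = Poly_Mapping.single (m + Poly_Mapping.single j 1) 1"
      using Xv_mult[of j m 1] by (simp only:)
    have "wdeg (m + Poly_Mapping.single j 1) < wdeg m + i + 1"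
      unfolding wdeg_add wdeg_single using Suc by simp
    then have "Poly_Mapping.single (m + Poly_Mapping.single j 1) (1::rat) \<in> Lk (wdeg m + i + 1)"
      unfolding Lk_def by simp
    then show ?thesis by (simp only: eq)
  qed
  have "d (Xv (i+1) * ?M) \<in> Lk (wdeg m + i + 1)"
    unfolding leib using Lk_add[OF t1 t2] .
  then show ?case by (simp only: e w)
qed

lemma lowerB:
  assumes "r \<in> Lk (Suc k)" shows "d r \<in> Lk k"
proof -
  have "r \<in> {r. d r \<in> Lk k}"
  proof (rule span_lemma[where S = "{m. wdeg m < Suc k}"])
    show "0 \<in> {r. d r \<in> Lk k}" by (simp only: mem_Collect_eq zero Lk_zero)
  next
    fix a b assume "a \<in> {r. d r \<in> Lk k}" "b \<in> {r. d r \<in> Lk k}"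
    then have "d a \<in> Lk k" "d b \<in> Lk k" by simp_all
    then have "d a + d b \<in> Lk k" by (rule Lk_add)
    then show "a + b \<in> {r. d r \<in> Lk k}" by (simp only: mem_Collect_eq add)
  next
    fix m :: mono and c :: rat assume "m \<in> {m. wdeg m < Suc k}"
    then have "wdeg m \<le> k" by simp
    then have "d (Poly_Mapping.single m 1) \<in> Lk k"
      using Lk_mono[OF monoA[of m]] by blast
    then have "const c * d (Poly_Mapping.single m 1) \<in> Lk k"
      using keys_const_mult[of c "d (Poly_Mapping.single m 1)"] unfolding Lk_def mem_Collect_eq by blast
    then have "d (const c * Poly_Mapping.single m 1) \<in> Lk k" by (simp only: cmul)
    then show "Poly_Mapping.single m c \<in> {r. d r \<in> Lk k}"
      using single_const[of m c] by simp
  next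
    show "Poly_Mapping.keys r \<subseteq> {m. wdeg m < Suc k}" using assms unfolding Lk_def by blast
  qed
  then show ?thesis by simp
qed

lemma goodC: "r \<in> Lk k \<Longrightarrow> \<forall>n. Xv (n + 1) * r \<in> range d"
proof (induction k arbitrary: r)
  case 0
  then have "Poly_Mapping.keys r = {}" unfolding Lk_def by blast
  then have "r = 0" by simp
  then have "Xv (n + 1) * r = d 0" for n by (simp only: zero mult_zero_right)
  then show ?case by blast
next
  case (Suc k)
  show ?case
  proof
    fix n
    have "d r \<in> Lk k" using lowerB[OF Suc.prems] .
    then have "Xv ((n + 1) + 1) * d r \<in> range d" using Suc.IH[of "d r"] by blast
    then obtain q where q: "Xv (n + 2) * d r = d q"
      by (auto simp: numeral_2_eq_2)
    have dx: "d (Xv (n+2)) = Xv (n+1)" using Dn[of "n+2"] by simp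
    have "d (Xv (n+2) * r) = Xv (n+2) * d r + Xv (n+1) * r"
      using leib[of "Xv (n+2)" r] by (simp only: dx)
    then have "d (Xv (n+2) * r - q) = Xv (n+1) * r"
      by (simp only: diff q[symmetric] add_diff_cancel_left')
    then show "Xv (n + 1) * r \<in> range d" by (rule range_eqI[OF sym])
  qed
qed

lemma allLk: "r \<in> Lk (Suc (\<Sum>m\<in>Poly_Mapping.keys r. wdeg m))"
  unfolding Lk_def mem_Collect_eq
proof (intro ballI)
  fix m assume "m \<in> Poly_Mapping.keys r"
  then have "wdeg m \<le> (\<Sum>m\<in>Poly_Mapping.keys r. wdeg m)"
    by (rule member_le_sum) simp_all
  then show "wdeg m < Suc (\<Sum>m\<in>Poly_Mapping.keys r. wdeg m)" by simp
qed

lemma good: "Xv (n + 1) * r \<in> range d"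
  using goodC[OF allLk] by blast

lemma single_img: "m \<noteq> 0 \<Longrightarrow> Poly_Mapping.single m c \<in> range d"
proof (induction m rule: mono_induct)
  case 1 then show ?case by simp
next
  case (2 m i)
  have "Xv (i + 1) * Poly_Mapping.single m c \<in> range d" by (rule good)
  then show ?case by (simp only: Xv_mult)
qed

end

theorem lemma8p4:
  fixes d :: "qpoly \<Rightarrow> qpoly" and p :: qpoly and k :: nat
  assumes "is_derivation d"
    and "d (Xv 1) = 0"
    and "\<And>n. n \<ge> 2 \<Longrightarrow> d (Xv n) = Xv (n - 1)"
    and "homogeneous k p" and "k > 0"
  shows "\<exists>q. d q = p"
proof -
  interpret der d using assms(1-3) by unfold_locales
  have "p \<in> range d"
  proof (rule span_lemma[where S = "{m. m \<noteq> 0}"])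
    show "0 \<in> range d" by (rule range_eqI[of _ _ 0]) (simp add: zero)
  next
    fix a b assume "a \<in> range d" "b \<in> range d"
    then obtain x y where "a = d x" "b = d y" by blast
    then have "a + b = d (x + y)" by (simp add: add)
    then show "a + b \<in> range d" by (rule range_eqI)
  next
    fix m :: mono and c :: rat assume "m \<in> {m. m \<noteq> 0}"
    then have "m \<noteq> 0" by simp
    then show "Poly_Mapping.single m c \<in> range d" by (rule single_img)
  next
    show "Poly_Mapping.keys p \<subseteq> {m. m \<noteq> 0}"
  proof
    fix m assume "m \<in> Poly_Mapping.keys p"
    then have "wdeg m = k" using assms(4) unfolding homogeneous_def by blast
    then have "m \<noteq> 0" using assms(5) wdeg_zero by auto
    then show "m \<in> {m. m \<noteq> 0}" by simp
  qed
  qed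
  then show ?thesis by blast
qed

end
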